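(* Suppose $\mathbf{X}=\mathbf{D}_1\boldsymbol{\Gamma}_1$, $\boldsymbol{\Gamma}_{i-1}=\mathbf{D}_i\boldsymbol{\Gamma}_i$ for $2\le i\le K$, all $\boldsymbol{\Gamma}_i\neq0$, and $\mathbf{Y}=\mathbf{X}+\mathbf{E}$ with $\|\mathbf{E}\|_{2,\infty}^{p}\le\epsilon_0$. Let $|\Gamma_i^{\min}|,|\Gamma_i^{\max}|$ be the smallest and largest absolute values of the nonzero entries of $\boldsymbol{\Gamma}_i$. Let $\hat{\boldsymbol{\Gamma}}_0=\mathbf{Y}$ and $\hat{\boldsymbol{\Gamma}}_i=\mathcal{S}_{\beta_i}(\mathbf{D}_i^T\hat{\boldsymbol{\Gamma}}_{i-1})$ for $1\le i\le K$ (layered soft thresholding). Define recursively $$\epsilon_i=\sqrt{\|\boldsymbol{\Gamma}_i\|_{0,\infty}^{p}}\,\big(\epsilon_{i-1}+\mu(\mathbf{D}_i)(\|\boldsymbol{\Gamma}_i\|_{0,\infty}^{s}-1)|\Gamma_i^{\max}|+\beta_i\big).$$ Assume that for all $1\le i\le K$: (a) $\|\boldsymbol{\Gamma}_i\|_{0,\infty}^{s}<\tfrac12\Big(1+\tfrac{1}{\mu(\mathbf{D}_i)}\tfrac{|\Gamma_i^{\min}|}{|\Gamma_i^{\max}|}\Big)-\tfrac{1}{\mu(\mathbf{D}_i)}\tfrac{\epsilon_{i-1}}{|\Gamma_i^{\max}|}$; and (b) $|\Gamma_i^{\min}|-(\|\boldsymbol{\Gamma}_i\|_{0,\infty}^{s}-1)\mu(\mathbf{D}_i)|\Gamma_i^{\max}|-\epsilon_{i-1}>\beta_i>\|\boldsymbol{\Gamma}_i\|_{0,\infty}^{s}\mu(\mathbf{D}_i)|\Gamma_i^{\max}|+\epsilon_{i-1}$.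 Then for all $1\le i\le K$: (1) the support of $\hat{\boldsymbol{\Gamma}}_i$ equals that of $\boldsymbol{\Gamma}_i$; and (2) $\|\boldsymbol{\Gamma}_i-\hat{\boldsymbol{\Gamma}}_i\|_{2,\infty}^{p}\le\epsilon_i$.
   Context: Setting. Signals are one-dimensional of length $N$ with periodic boundary conditions; $m_0=1$, $\boldsymbol{\Gamma}_0=\mathbf{X}$. For $i\ge1$, $\boldsymbol{\Gamma}_i\in\mathbb{R}^{Nm_i}$ has entry $km_i+r$ equal to the coefficient of filter $r$ at spatial shift $k$. $\mathbf{D}_i\in\mathbb{R}^{Nm_{i-1}\times Nm_i}$ is a (stride) convolutional dictionary whose column $km_i+r$ is local filter $r$ (length $n_{i-1}m_{i-1}$) placed cyclically on entries $km_{i-1},\dots,km_{i-1}+n_{i-1}m_{i-1}-1$, zero elsewhere. Columns have unit $\ell_2$ norm; $\mu(\mathbf{D})=\max_{i\neq j}|\mathbf{d}_i^T\mathbf{d}_j|$. Stripes: $\mathbf{S}_{i,j}\boldsymbol{\Gamma}_i$ is the subvector of $\boldsymbol{\Gamma}_i$ at spatial shifts $k\in\{j-n_{i-1}+1,\dots,j+n_{i-1}-1\}$ (mod $N$), all channels; $\|\boldsymbol{\Gamma}_i\|_{0,\infty}^{s}=\max_j\|\mathbf{S}_{i,j}\boldsymbol{\Gamma}_i\|_0$. Patches: for $i\ge0$, $\mathbf{P}_{i,j}\mathbf{V}$ extracts from $\mathbf{V}\in\mathbb{R}^{Nm_i}$ the cyclically contiguous subvector at spatial shifts $j,\dots,j+n_i-1$,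 all channels (length $n_im_i$); $\|\mathbf{V}\|_{2,\infty}^{p}=\max_j\|\mathbf{P}_{i,j}\mathbf{V}\|_2$, $\|\mathbf{V}\|_{0,\infty}^{p}=\max_j\|\mathbf{P}_{i,j}\mathbf{V}\|_0$. For $\boldsymbol{\Gamma}_K$ the patch size $n_K$ is an arbitrary fixed choice. Soft thresholding: $\mathcal{S}_\beta$ acts entrywise, $\mathcal{S}_\beta(z)=z+\beta$ if $z<-\beta$, $0$ if $|z|\le\beta$, $z-\beta$ if $z>\beta$. *)

theory Defs
  imports Main "HOL-Library.Multiset" Complex_Main
begin

text \<open>Vectors in R^(N*m) are functions nat => real, meaningful on indices < N*m.
  Entry k*m + r = channel r at spatial shift k.  Matrices are nat => nat => real (row, column).\<close>

definition cyc_window :: "nat \<Rightarrow> nat \<Rightarrow> int \<Rightarrow> int \<Rightarrow> nat set" where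
  "cyc_window N j a b = {k. k < N \<and> (\<exists>d::int. a \<le> d \<and> d \<le> b \<and> int k = (int j + d) mod int N)}"

definition coords :: "nat \<Rightarrow> nat \<Rightarrow> nat set \<Rightarrow> nat set" where
  "coords N m W = {idx. idx < N * m \<and> idx div m \<in> W}"

text \<open>Stripe S_{i,j}: shifts j-n+1 .. j+n-1, where n = n_{i-1}.\<close>
definition stripe :: "nat \<Rightarrow> nat \<Rightarrow> nat \<Rightarrow> nat \<Rightarrow> nat set" where
  "stripe N m n j = coords N m (cyc_window N j (-(int n - 1)) (int n - 1))"

text \<open>Patch P_{i,j}: shifts j .. j+n-1, where n = n_i.\<close>
definition patch :: "nat \<Rightarrow> nat \<Rightarrow> nat \<Rightarrow> nat \<Rightarrow> nat set" where
  "patch N m n j = coords N m (cyc_window N j 0 (int n - 1))"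

definition stripe_l0 :: "nat \<Rightarrow> nat \<Rightarrow> nat \<Rightarrow> (nat \<Rightarrow> real) \<Rightarrow> nat" where
  "stripe_l0 N m n V = Max ((\<lambda>j. card {idx \<in> stripe N m n j. V idx \<noteq> 0}) ` {..<N})"

definition patch_l0 :: "nat \<Rightarrow> nat \<Rightarrow> nat \<Rightarrow> (nat \<Rightarrow> real) \<Rightarrow> nat" where
  "patch_l0 N m n V = Max ((\<lambda>j. card {idx \<in> patch N m n j. V idx \<noteq> 0}) ` {..<N})"

definition patch_l2 :: "nat \<Rightarrow> nat \<Rightarrow> nat \<Rightarrow> (nat \<Rightarrow> real) \<Rightarrow> real" where
  "patch_l2 N m n V = Max ((\<lambda>j. sqrt (\<Sum>idx \<in> patch N m n j. (V idx)\<^sup>2)) ` {..<N})"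

definition mutual_coh :: "nat \<Rightarrow> nat \<Rightarrow> (nat \<Rightarrow> nat \<Rightarrow> real) \<Rightarrow> real" where
  "mutual_coh R C D = Max (insert 0 {\<bar>\<Sum>row<R. D row a * D row b\<bar> | a b. a < C \<and> b < C \<and> a \<noteq> b})"

text \<open>Stride convolutional dictionary in R^{(N*mp) x (N*mc)} with local filters of length np*mp
  (column k*mc + r is filter r placed cyclically on rows k*mp, ..., k*mp + np*mp - 1),
  with unit l2-norm columns.\<close>
definition conv_dict :: "nat \<Rightarrow> nat \<Rightarrow> nat \<Rightarrow> nat \<Rightarrow> (nat \<Rightarrow> nat \<Rightarrow> real) \<Rightarrow> bool" where
  "conv_dict N mp mc np D \<longleftrightarrow>
     (\<exists>f :: nat \<Rightarrow> nat \<Rightarrow> real. \<forall>k<N. \<forall>r<mc. \<forall>row<N*mp.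
        D row (k*mc + r) =
          (let t = nat ((int row - int (k*mp)) mod int (N*mp)) in if t < np*mp then f r t else 0))
   \<and> (\<forall>c<N*mc. (\<Sum>row<N*mp. (D row c)\<^sup>2) = 1)"

definition mat_vec :: "nat \<Rightarrow> (nat \<Rightarrow> nat \<Rightarrow> real) \<Rightarrow> (nat \<Rightarrow> real) \<Rightarrow> (nat \<Rightarrow> real)" where
  "mat_vec C D v = (\<lambda>row. \<Sum>c<C. D row c * v c)"

definition mat_tvec :: "nat \<Rightarrow> (nat \<Rightarrow> nat \<Rightarrow> real) \<Rightarrow> (nat \<Rightarrow> real) \<Rightarrow> (nat \<Rightarrow> real)" where
  "mat_tvec R D v = (\<lambda>c. \<Sum>row<R. D row c * v row)"

definition soft_thr :: "real \<Rightarrow> real \<Rightarrow> real" where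
  "soft_thr \<beta> z = (if z < -\<beta> then z + \<beta> else if z > \<beta> then z - \<beta> else 0)"

definition abs_min_nz :: "nat \<Rightarrow> (nat \<Rightarrow> real) \<Rightarrow> real" where
  "abs_min_nz L V = Min {\<bar>V idx\<bar> | idx. idx < L \<and> V idx \<noteq> 0}"

definition abs_max_nz :: "nat \<Rightarrow> (nat \<Rightarrow> real) \<Rightarrow> real" where
  "abs_max_nz L V = Max {\<bar>V idx\<bar> | idx. idx < L \<and> V idx \<noteq> 0}"

end

theory Submission
  imports Defs "HOL-Analysis.Convex"
begin

lemma col_support:
  assumes cd: "conv_dict N mp mc np D" and k: "k < N" and r: "r < mc" and row: "row < N*mp"
    and nz: "D row (k*mc + r) \<noteq> 0" and mp: "mp \<ge> 1"
  shows "\<exists>d. d < np \<and> row div mp = (k + d) mod N"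
proof -
  from cd obtain f where f: "\<forall>k<N. \<forall>r<mc. \<forall>row<N*mp.
        D row (k*mc + r) =
          (let t = nat ((int row - int (k*mp)) mod int (N*mp)) in if t < np*mp then f r t else 0)"
    unfolding conv_dict_def by blast
  define t where "t = nat ((int row - int (k*mp)) mod int (N*mp))"
  have tl: "t < np*mp" using f k r row nz unfolding t_def Let_def by (metis)
  have Npos: "N*mp > 0" using row by (metis gr_zeroI less_nat_zero_code)
  have "int t = (int row - int (k*mp)) mod int (N*mp)" unfolding t_def using Npos by simp
  hence "int row mod int (N*mp) = (int (k*mp) + int t) mod int (N*mp)"
    by (metis add.commute diff_add_cancel mod_add_right_eq)
  moreover have "int row mod int (N*mp) = int row" using row by (metis mod_less of_nat_mod)
  ultimately have "int row = int ((k*mp + t) mod (N*mp))" by (simp add: zmod_int)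
  hence "row = (k*mp + t) mod (N*mp)" by simp
  moreover have "(k*mp + t) mod (N*mp) = mp * ((k*mp + t) div mp mod N) + (k*mp + t) mod mp"
    using mod_mult2_eq[of "k*mp + t" mp N] by (simp add: mult.commute)
  ultimately have "row div mp = ((k*mp + t) div mp) mod N" using mp by simp
  also have "(k*mp + t) div mp = k + t div mp" using mp by simp
  finally have "row div mp = (k + t div mp) mod N" .
  moreover have "t div mp < np" using tl mp
    by (simp add: div_less_iff_less_mult)
  ultimately show ?thesis by blast
qed

lemma col_support':
  assumes cd: "conv_dict N mp mc np D" and c: "c < N*mc" and row: "row < N*mp"
    and nz: "D row c \<noteq> 0" and mp: "mp \<ge> 1" and mc: "mc \<ge> 1"
  shows "\<exists>d. d < np \<and> row div mp = (c div mc + d) mod N"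
proof -
  have k: "c div mc < N" using c mc by (simp add: div_less_iff_less_mult)
  have r: "c mod mc < mc" using mc by simp
  have "c = c div mc * mc + c mod mc" by simp
  thus ?thesis using col_support[OF cd k r row _ mp] nz by metis
qed

lemma row_in_patch:
  assumes cd: "conv_dict N mp mc np D" and c: "c < N*mc" and row: "row < N*mp"
    and nz: "D row c \<noteq> 0" and mp: "mp \<ge> 1" and mc: "mc \<ge> 1"
  shows "row \<in> patch N mp np (c div mc)"
proof -
  obtain d where d: "d < np" "row div mp = (c div mc + d) mod N"
    using col_support'[OF assms] by blast
  have Npos: "N > 0" using row by (metis gr_zeroI less_nat_zero_code mult_0)
  have "int (row div mp) = (int (c div mc) + int d) mod int N" using d by (simp add: zmod_int)
  moreover have "row div mp < N" using d Npos by simp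
  ultimately show ?thesis unfolding patch_def coords_def cyc_window_def using row d(1)
    by (auto intro!: exI[of _ "int d"])
qed

lemma overlap_stripe:
  assumes cd: "conv_dict N mp mc np D" and c: "c < N*mc" and c': "c' < N*mc" and row: "row < N*mp"
    and nz: "D row c \<noteq> 0" and nz': "D row c' \<noteq> 0" and mp: "mp \<ge> 1" and mc: "mc \<ge> 1"
  shows "c' \<in> stripe N mc np (c div mc)"
proof -
  obtain d where d: "d < np" "row div mp = (c div mc + d) mod N"
    using col_support'[OF cd c row nz mp mc] by blast
  obtain d' where d': "d' < np" "row div mp = (c' div mc + d') mod N"
    using col_support'[OF cd c' row nz' mp mc] by blast
  have k': "c' div mc < N" using c' mc by (simp add: div_less_iff_less_mult)
  have "(int (c div mc) + int d) mod int N = (int (c' div mc) + int d') mod int N"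
    using d d' by (metis of_nat_add zmod_int)
  hence "(int (c div mc) + int d - int d') mod int N = (int (c' div mc) + int d' - int d') mod int N"
    by (metis mod_diff_left_eq)
  hence "int (c' div mc) = (int (c div mc) + (int d - int d')) mod int N"
    using k' by (simp add: algebra_simps)
  thus ?thesis unfolding stripe_def coords_def cyc_window_def using c' k' d(1) d'(1)
    by (auto intro!: exI[of _ "int d - int d'"])
qed

lemma layer:
  fixes N mp mc np :: nat and D :: "nat \<Rightarrow> nat \<Rightarrow> real" and g gp hp :: "nat \<Rightarrow> real" and \<beta> ep :: real
  assumes N: "N \<ge> 1" and mp: "mp \<ge> 1" and mc: "mc \<ge> 1" and np: "np \<ge> 1"
   and cd: "conv_dict N mp mc np D"
   and model: "\<forall>row < N*mp. gp row = mat_vec (N*mc) D g row"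
   and nz: "\<exists>idx < N*mc. g idx \<noteq> 0"
   and err: "\<forall>j<N. sqrt (\<Sum>idx\<in>patch N mp np j. (hp idx - gp idx)\<^sup>2) \<le> ep"
   and cb: "abs_min_nz (N*mc) g - (real (stripe_l0 N mc np g) - 1) * mutual_coh (N*mp) (N*mc) D * abs_max_nz (N*mc) g - ep > \<beta>
       \<and> \<beta> > real (stripe_l0 N mc np g) * mutual_coh (N*mp) (N*mc) D * abs_max_nz (N*mc) g + ep"
  shows "\<forall>c < N*mc. (soft_thr \<beta> (mat_tvec (N*mp) D hp c) \<noteq> 0 \<longleftrightarrow> g c \<noteq> 0)
     \<and> \<bar>g c - soft_thr \<beta> (mat_tvec (N*mp) D hp c)\<bar>
        \<le> ep + mutual_coh (N*mp) (N*mc) D * (real (stripe_l0 N mc np g) - 1) * abs_max_nz (N*mc) g + \<beta>"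
proof -
  define R where "R = N*mp"
  define L where "L = N*mc"
  define \<mu> where "\<mu> = mutual_coh R L D"
  define s where "s = stripe_l0 N mc np g"
  define Gmax where "Gmax = abs_max_nz L g"
  define Gmin where "Gmin = abs_min_nz L g"
  define ip where "ip a b = (\<Sum>row<R. D row a * D row b)" for a b
  define e where "e row = hp row - gp row" for row
  define z where "z c = mat_tvec R D hp c" for c
  define B where "B = ep + \<mu> * (real s - 1) * Gmax + \<beta>"
  have cb': "Gmin - (real s - 1) * \<mu> * Gmax - ep > \<beta>" "\<beta> > real s * \<mu> * Gmax + ep"
    using cb unfolding Gmin_def Gmax_def s_def \<mu>_def R_def L_def by auto
  have finM: "finite {\<bar>ip a b\<bar> | a b. a < L \<and> b < L \<and> a \<noteq> b}"
    by (rule finite_subset[of _ "(\<lambda>(a,b). \<bar>ip a b\<bar>) ` ({..<L}\<times>{..<L})"]) auto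
  have mu_bd: "\<bar>ip a b\<bar> \<le> \<mu>" if "a < L" "b < L" "a \<noteq> b" for a b
  proof -
    have "\<bar>ip a b\<bar> \<in> insert 0 {\<bar>ip a b\<bar> | a b. a < L \<and> b < L \<and> a \<noteq> b}" using that by blast
    thus ?thesis unfolding \<mu>_def mutual_coh_def ip_def[symmetric] using finM by (simp add: Max_ge)
  qed
  have mu0: "\<mu> \<ge> 0" unfolding \<mu>_def mutual_coh_def ip_def[symmetric] using finM by (simp add: Max_ge)
  have ipcc: "ip c c = 1" if "c < L" for c
    using cd that unfolding conv_dict_def ip_def L_def R_def by (simp add: power2_eq_square)
  define GS where "GS = {\<bar>g idx\<bar> | idx. idx < L \<and> g idx \<noteq> 0}"
  have finGS: "finite GS" unfolding GS_def
    by (rule finite_subset[of _ "(\<lambda>idx. \<bar>g idx\<bar>) ` {..<L}"]) auto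
  have Gmax_ge: "\<bar>g c\<bar> \<le> Gmax" if "c < L" "g c \<noteq> 0" for c
    using that finGS unfolding Gmax_def abs_max_nz_def GS_def[symmetric] by (auto simp: GS_def intro!: Max_ge)
  have Gmin_le: "Gmin \<le> \<bar>g c\<bar>" if "c < L" "g c \<noteq> 0" for c
    using that finGS unfolding Gmin_def abs_min_nz_def GS_def[symmetric] by (auto simp: GS_def intro!: Min_le)
  have Gmax0: "Gmax \<ge> 0" using nz Gmax_ge unfolding L_def by (meson abs_ge_zero order_trans)
  have expand: "z c = (\<Sum>c'<L. ip c c' * g c') + (\<Sum>row<R. D row c * e row)" for c
  proof -
    have "z c = (\<Sum>row<R. D row c * (gp row + e row))"
      unfolding z_def mat_tvec_def e_def by simp
    also have "\<dots> = (\<Sum>row<R. D row c * gp row) + (\<Sum>row<R. D row c * e row)"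
      by (simp add: algebra_simps sum.distrib)
    also have "(\<Sum>row<R. D row c * gp row) = (\<Sum>row<R. \<Sum>c'<L. D row c * D row c' * g c')"
      using model unfolding R_def L_def mat_vec_def by (auto simp: sum_distrib_left mult.assoc intro!: sum.cong)
    also have "\<dots> = (\<Sum>c'<L. ip c c' * g c')"
      unfolding ip_def by (subst sum.swap) (simp add: sum_distrib_right)
    finally show ?thesis .
  qed
  have ebd: "\<bar>\<Sum>row<R. D row c * e row\<bar> \<le> ep" if c: "c < L" for c
  proof -
    define P where "P = patch N mp np (c div mc)"
    have k: "c div mc < N" using c mc unfolding L_def by (simp add: div_less_iff_less_mult)
    have PR: "P \<subseteq> {..<R}" unfolding P_def patch_def coords_def R_def by auto
    have "(\<Sum>row<R. D row c * e row) = (\<Sum>row\<in>P. D row c * e row)"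
    proof (rule sum.mono_neutral_right)
      show "\<forall>i\<in>{..<R} - P. D i c * e i = 0"
        using row_in_patch[OF cd _ _ _ mp mc, of c] c unfolding P_def R_def L_def by auto
    qed (use PR in auto)
    moreover have "(\<Sum>row\<in>P. D row c * e row)\<^sup>2 \<le> (\<Sum>row\<in>P. (D row c)\<^sup>2) * (\<Sum>row\<in>P. (e row)\<^sup>2)"
      by (rule Cauchy_Schwarz_ineq_sum)
    moreover have "(\<Sum>row\<in>P. (D row c)\<^sup>2) \<le> 1"
    proof -
      have "(\<Sum>row\<in>P. (D row c)\<^sup>2) \<le> (\<Sum>row<R. (D row c)\<^sup>2)"
        by (rule sum_mono2) (use PR in auto)
      also have "\<dots> = 1" using cd c unfolding conv_dict_def R_def L_def by auto
      finally show ?thesis .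
    qed
    moreover have "sqrt (\<Sum>row\<in>P. (e row)\<^sup>2) \<le> ep"
      using err k unfolding P_def e_def by auto
    ultimately show ?thesis
    proof -
      assume eq: "(\<Sum>row<R. D row c * e row) = (\<Sum>row\<in>P. D row c * e row)"
        and cs: "(\<Sum>row\<in>P. D row c * e row)\<^sup>2 \<le> (\<Sum>row\<in>P. (D row c)\<^sup>2) * (\<Sum>row\<in>P. (e row)\<^sup>2)"
        and d1: "(\<Sum>row\<in>P. (D row c)\<^sup>2) \<le> 1"
        and e1: "sqrt (\<Sum>row\<in>P. (e row)\<^sup>2) \<le> ep"
      have nn: "0 \<le> (\<Sum>row\<in>P. (e row)\<^sup>2)" by (simp add: sum_nonneg)
      have "(\<Sum>row\<in>P. D row c * e row)\<^sup>2 \<le> (\<Sum>row\<in>P. (e row)\<^sup>2)"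
      proof -
        have "(\<Sum>row\<in>P. (D row c)\<^sup>2) * (\<Sum>row\<in>P. (e row)\<^sup>2) \<le> 1 * (\<Sum>row\<in>P. (e row)\<^sup>2)"
          by (rule mult_right_mono[OF d1 nn])
        thus ?thesis using cs by simp
      qed
      hence "sqrt ((\<Sum>row\<in>P. D row c * e row)\<^sup>2) \<le> sqrt (\<Sum>row\<in>P. (e row)\<^sup>2)"
        by (rule real_sqrt_le_mono)
      hence "\<bar>\<Sum>row\<in>P. D row c * e row\<bar> \<le> sqrt (\<Sum>row\<in>P. (e row)\<^sup>2)"
        by simp
      thus ?thesis using eq e1 by simp
    qed
  qed
  define A where "A c = {c'\<in>stripe N mc np (c div mc). g c' \<noteq> 0}" for c
  have finA: "finite (A c)" for c
    by (rule finite_subset[of _ "{..<L}"]) (auto simp: A_def stripe_def coords_def L_def)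
  have AL: "A c \<subseteq> {..<L}" for c by (auto simp: A_def stripe_def coords_def L_def)
  have cardA: "card (A c) \<le> s" if c: "c < L" for c
  proof -
    have k: "c div mc < N" using c mc unfolding L_def by (simp add: div_less_iff_less_mult)
    show ?thesis unfolding s_def stripe_l0_def A_def
      by (rule Max_ge) (use k in auto)
  qed
  have cA: "c \<in> A c" if c: "c < L" "g c \<noteq> 0" for c
  proof -
    have k: "c div mc < N" using c mc unfolding L_def by (simp add: div_less_iff_less_mult)
    show ?thesis using c k np unfolding A_def stripe_def coords_def cyc_window_def L_def
      by (auto intro!: exI[of _ 0])
  qed
  have ipz: "ip c c' = 0" if "c < L" "c' < L" "c' \<notin> stripe N mc np (c div mc)" for c c'
  proof -
    have "\<forall>row<R. D row c * D row c' = 0"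
      using overlap_stripe[OF cd _ _ _ _ _ mp mc, of c c'] that unfolding R_def L_def by auto
    thus ?thesis unfolding ip_def by (intro sum.neutral) auto
  qed
  have ibd: "\<bar>\<Sum>c'\<in>{..<L}-{c}. ip c c' * g c'\<bar> \<le> real (card (A c - {c})) * (\<mu> * Gmax)"
    if c: "c < L" for c
  proof -
    have "\<bar>\<Sum>c'\<in>{..<L}-{c}. ip c c' * g c'\<bar> \<le> (\<Sum>c'\<in>{..<L}-{c}. \<bar>ip c c' * g c'\<bar>)"
      by (rule sum_abs)
    also have "\<dots> = (\<Sum>c'\<in>A c-{c}. \<bar>ip c c' * g c'\<bar>)"
    proof (rule sum.mono_neutral_right)
      show "\<forall>i\<in>{..<L} - {c} - (A c - {c}). \<bar>ip c i * g i\<bar> = 0"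
        using ipz c unfolding A_def by auto
    qed (use AL in auto)
    also have "\<dots> \<le> real (card (A c - {c})) * (\<mu> * Gmax)"
    proof (rule sum_bounded_above)
      fix c' assume c': "c' \<in> A c - {c}"
      hence "c' < L" "g c' \<noteq> 0" "c' \<noteq> c" using AL unfolding A_def by auto
      hence "\<bar>ip c c'\<bar> \<le> \<mu>" "\<bar>g c'\<bar> \<le> Gmax" using mu_bd Gmax_ge c by auto
      thus "\<bar>ip c c' * g c'\<bar> \<le> \<mu> * Gmax" by (simp add: abs_mult mult_mono mu0)
    qed
    finally show ?thesis .
  qed
  have ep0: "ep \<ge> 0" using err N by (meson less_le_trans zero_less_one order_trans real_sqrt_ge_zero sum_nonneg zero_le_power2)
  have b0: "\<beta> \<ge> 0" using cb'(2) ep0 mu0 Gmax0 by (smt (verit) mult_nonneg_nonneg of_nat_0_le_iff)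
  have zg: "\<bar>z c - g c\<bar> \<le> real (card (A c - {c})) * (\<mu> * Gmax) + ep" if c: "c < L" for c
  proof -
    have "(\<Sum>c'<L. ip c c' * g c') = ip c c * g c + (\<Sum>c'\<in>{..<L}-{c}. ip c c' * g c')"
      using c by (simp add: sum.remove)
    hence "z c - g c = (\<Sum>c'\<in>{..<L}-{c}. ip c c' * g c') + (\<Sum>row<R. D row c * e row)"
      using expand[of c] ipcc[OF c] by simp
    thus ?thesis using ibd[OF c] ebd[OF c] by linarith
  qed
  have supp: "\<bar>z c - g c\<bar> \<le> (real s - 1) * \<mu> * Gmax + ep" if c: "c < L" "g c \<noteq> 0" for c
  proof -
    have "card (A c - {c}) = card (A c) - 1" using cA[OF c] finA by simp
    moreover have "card (A c) \<ge> 1" using cA[OF c] finA by (metis One_nat_def Suc_leI card_gt_0_iff empty_iff)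
    ultimately have "real (card (A c - {c})) \<le> real s - 1" using cardA[OF c(1)] by simp
    hence "real (card (A c - {c})) * (\<mu> * Gmax) \<le> (real s - 1) * (\<mu> * Gmax)"
      using mu0 Gmax0 by (simp add: mult_right_mono)
    thus ?thesis using zg[OF c(1)] by (simp add: mult.assoc)
  qed
  have offs: "\<bar>z c\<bar> \<le> real s * \<mu> * Gmax + ep" if c: "c < L" "g c = 0" for c
  proof -
    have "real (card (A c - {c})) \<le> real s" using cardA[OF c(1)] finA
      by (meson card_Diff1_le le_trans of_nat_le_iff)
    hence "real (card (A c - {c})) * (\<mu> * Gmax) \<le> real s * (\<mu> * Gmax)"
      using mu0 Gmax0 by (simp add: mult_right_mono)
    thus ?thesis using zg[OF c(1)] c(2) by (simp add: mult.assoc)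
  qed
  have st_big: "soft_thr \<beta> x \<noteq> 0 \<and> \<bar>soft_thr \<beta> x - x\<bar> = \<beta>" if "\<bar>x\<bar> > \<beta>" for x
    using that b0 unfolding soft_thr_def by auto
  have st_small: "soft_thr \<beta> x = 0" if "\<bar>x\<bar> \<le> \<beta>" for x
    using that unfolding soft_thr_def by auto
  have case1: "soft_thr \<beta> (z c) \<noteq> 0 \<and> \<bar>g c - soft_thr \<beta> (z c)\<bar> \<le> B" if c: "c < L" "g c \<noteq> 0" for c
  proof -
    have "\<bar>z c\<bar> > \<beta>" using supp[OF c] Gmin_le[OF c] cb'(1) by linarith
    from st_big[OF this] have "soft_thr \<beta> (z c) \<noteq> 0" "\<bar>soft_thr \<beta> (z c) - z c\<bar> = \<beta>" by auto
    moreover have "\<bar>g c - soft_thr \<beta> (z c)\<bar> \<le> \<bar>z c - g c\<bar> + \<bar>soft_thr \<beta> (z c) - z c\<bar>" by linarith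
    ultimately show ?thesis using supp[OF c] unfolding B_def by (simp add: algebra_simps)
  qed
  have B0: "B \<ge> 0" using nz case1 unfolding L_def by (meson abs_ge_zero order_trans)
  have "\<forall>c<L. (soft_thr \<beta> (z c) \<noteq> 0 \<longleftrightarrow> g c \<noteq> 0) \<and> \<bar>g c - soft_thr \<beta> (z c)\<bar> \<le> B"
  proof (intro allI impI)
    fix c assume c: "c < L"
    show "(soft_thr \<beta> (z c) \<noteq> 0 \<longleftrightarrow> g c \<noteq> 0) \<and> \<bar>g c - soft_thr \<beta> (z c)\<bar> \<le> B"
    proof (cases "g c = 0")
      case True
      hence "soft_thr \<beta> (z c) = 0" using offs[OF c True] cb'(2) by (intro st_small) linarith
      thus ?thesis using True B0 by simp
    qed (use case1 c in auto)
  qed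
  thus ?thesis unfolding z_def B_def R_def L_def \<mu>_def s_def Gmax_def by simp
qed
lemma patch_bd:
  fixes g h :: "nat \<Rightarrow> real"
  assumes supp: "\<forall>c<L. (h c \<noteq> 0 \<longleftrightarrow> g c \<noteq> 0)" and pw: "\<forall>c<L. \<bar>g c - h c\<bar> \<le> B"
    and B0: "B \<ge> 0" and PL: "P \<subseteq> {..<L}"
  shows "sqrt (\<Sum>c\<in>P. (h c - g c)\<^sup>2) \<le> sqrt (real (card {c\<in>P. g c \<noteq> 0})) * B"
proof -
  define Q where "Q = {c\<in>P. g c \<noteq> 0}"
  have finP: "finite P" using PL finite_subset by blast
  have "(\<Sum>c\<in>P. (h c - g c)\<^sup>2) = (\<Sum>c\<in>Q. (h c - g c)\<^sup>2)"
  proof (rule sum.mono_neutral_right)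
    show "\<forall>i\<in>P - Q. (h i - g i)\<^sup>2 = 0" using supp PL unfolding Q_def by auto
  qed (use finP in \<open>auto simp: Q_def\<close>)
  also have "\<dots> \<le> real (card Q) * B\<^sup>2"
  proof (rule sum_bounded_above)
    fix c assume "c \<in> Q"
    hence "c < L" using PL unfolding Q_def by auto
    hence "\<bar>h c - g c\<bar> \<le> B" using pw by (simp add: abs_minus_commute)
    thus "(h c - g c)\<^sup>2 \<le> B\<^sup>2" by (metis abs_ge_zero power2_abs power_mono)
  qed
  finally have "sqrt (\<Sum>c\<in>P. (h c - g c)\<^sup>2) \<le> sqrt (real (card Q) * B\<^sup>2)"
    by (rule real_sqrt_le_mono)
  also have "\<dots> = sqrt (real (card Q)) * B" using B0 by (simp add: real_sqrt_mult)
  finally show ?thesis unfolding Q_def .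
qed


theorem theorem4:
  fixes N K :: nat
    and m n :: "nat \<Rightarrow> nat"
    and D :: "nat \<Rightarrow> nat \<Rightarrow> nat \<Rightarrow> real"
    and G Ghat :: "nat \<Rightarrow> nat \<Rightarrow> real"
    and X Y E :: "nat \<Rightarrow> real"
    and \<beta> eps :: "nat \<Rightarrow> real"
    and eps0 :: real
  assumes N_pos: "N \<ge> 1"
    and m0: "m 0 = 1"
    and m_pos: "\<forall>i\<le>K. m i \<ge> 1"
    and n_range: "\<forall>i\<le>K. 1 \<le> n i \<and> n i \<le> N"
    and dict: "\<forall>i. 1 \<le> i \<and> i \<le> K \<longrightarrow> conv_dict N (m (i-1)) (m i) (n (i-1)) (D i)"
    and G0: "G 0 = X"
    and model: "\<forall>i. 1 \<le> i \<and> i \<le> K \<longrightarrow>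
                  (\<forall>row < N * m (i-1). G (i-1) row = mat_vec (N * m i) (D i) (G i) row)"
    and nonzero: "\<forall>i. 1 \<le> i \<and> i \<le> K \<longrightarrow> (\<exists>idx < N * m i. G i idx \<noteq> 0)"
    and noisy: "\<forall>row < N. Y row = X row + E row"
    and noise_bd: "patch_l2 N 1 (n 0) E \<le> eps0"
    and Ghat0: "Ghat 0 = Y"
    and Ghat_rec: "\<forall>i. 1 \<le> i \<and> i \<le> K \<longrightarrow>
                  Ghat i = (\<lambda>c. soft_thr (\<beta> i) (mat_tvec (N * m (i-1)) (D i) (Ghat (i-1)) c))"
    and eps_0: "eps 0 = eps0"
    and eps_rec: "\<forall>i. 1 \<le> i \<and> i \<le> K \<longrightarrow>
                  eps i = sqrt (real (patch_l0 N (m i) (n i) (G i))) *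
                    (eps (i-1) + mutual_coh (N * m (i-1)) (N * m i) (D i) *
                       (real (stripe_l0 N (m i) (n (i-1)) (G i)) - 1) * abs_max_nz (N * m i) (G i)
                     + \<beta> i)"
    and cond_a: "\<forall>i. 1 \<le> i \<and> i \<le> K \<longrightarrow>
                  real (stripe_l0 N (m i) (n (i-1)) (G i))
                  < 1/2 * (1 + 1 / mutual_coh (N * m (i-1)) (N * m i) (D i) *
                              (abs_min_nz (N * m i) (G i) / abs_max_nz (N * m i) (G i)))
                    - 1 / mutual_coh (N * m (i-1)) (N * m i) (D i) *
                              (eps (i-1) / abs_max_nz (N * m i) (G i))"
    and cond_b: "\<forall>i. 1 \<le> i \<and> i \<le> K \<longrightarrow>
                  abs_min_nz (N * m i) (G i)
                    - (real (stripe_l0 N (m i) (n (i-1)) (G i)) - 1) *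
                       mutual_coh (N * m (i-1)) (N * m i) (D i) * abs_max_nz (N * m i) (G i)
                    - eps (i-1) > \<beta> i
                  \<and> \<beta> i > real (stripe_l0 N (m i) (n (i-1)) (G i)) *
                       mutual_coh (N * m (i-1)) (N * m i) (D i) * abs_max_nz (N * m i) (G i)
                    + eps (i-1)"
  shows "\<forall>i. 1 \<le> i \<and> i \<le> K \<longrightarrow>
           (\<forall>idx < N * m i. (Ghat i idx \<noteq> 0 \<longleftrightarrow> G i idx \<noteq> 0))
           \<and> patch_l2 N (m i) (n i) (\<lambda>idx. G i idx - Ghat i idx) \<le> eps i"
proof -
  define Q where "Q i = ((\<forall>j<N. sqrt (\<Sum>idx\<in>patch N (m i) (n i) j. (Ghat i idx - G i idx)\<^sup>2) \<le> eps i)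
     \<and> (1 \<le> i \<longrightarrow> (\<forall>idx < N * m i. (Ghat i idx \<noteq> 0 \<longleftrightarrow> G i idx \<noteq> 0))))" for i
  have base: "Q 0"
  proof -
    have "sqrt (\<Sum>idx\<in>patch N (m 0) (n 0) j. (Ghat 0 idx - G 0 idx)\<^sup>2) \<le> eps 0" if j: "j < N" for j
    proof -
      have "(\<Sum>idx\<in>patch N (m 0) (n 0) j. (Ghat 0 idx - G 0 idx)\<^sup>2) = (\<Sum>idx\<in>patch N 1 (n 0) j. (E idx)\<^sup>2)"
        using m0 noisy G0 Ghat0 by (intro sum.cong) (auto simp: patch_def coords_def)
      moreover have "sqrt (\<Sum>idx\<in>patch N 1 (n 0) j. (E idx)\<^sup>2) \<le> patch_l2 N 1 (n 0) E"
        unfolding patch_l2_def using j by (intro Max_ge) auto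
      ultimately show ?thesis using noise_bd eps_0 by simp
    qed
    thus ?thesis unfolding Q_def by simp
  qed
  have step: "Q (Suc i)" if i: "Suc i \<le> K" and IH: "Q i" for i
  proof -
    have mi: "m i \<ge> 1" "m (Suc i) \<ge> 1" using m_pos i by auto
    have ni: "n i \<ge> 1" "n (Suc i) \<ge> 1" using n_range i by auto
    have cd: "conv_dict N (m i) (m (Suc i)) (n i) (D (Suc i))" using dict i by (metis diff_Suc_1 le_add1 plus_1_eq_Suc)
    have mo: "\<forall>row < N * m i. G i row = mat_vec (N * m (Suc i)) (D (Suc i)) (G (Suc i)) row"
      using model i by (metis diff_Suc_1 le_add1 plus_1_eq_Suc)
    have nzi: "\<exists>idx < N * m (Suc i). G (Suc i) idx \<noteq> 0" using nonzero i by simp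
    have er: "\<forall>j<N. sqrt (\<Sum>idx\<in>patch N (m i) (n i) j. (Ghat i idx - G i idx)\<^sup>2) \<le> eps i"
      using IH unfolding Q_def by simp
    have cbi: "abs_min_nz (N * m (Suc i)) (G (Suc i))
                    - (real (stripe_l0 N (m (Suc i)) (n i) (G (Suc i))) - 1) *
                       mutual_coh (N * m i) (N * m (Suc i)) (D (Suc i)) * abs_max_nz (N * m (Suc i)) (G (Suc i))
                    - eps i > \<beta> (Suc i)
                  \<and> \<beta> (Suc i) > real (stripe_l0 N (m (Suc i)) (n i) (G (Suc i))) *
                       mutual_coh (N * m i) (N * m (Suc i)) (D (Suc i)) * abs_max_nz (N * m (Suc i)) (G (Suc i))
                    + eps i"
      using cond_b i by (metis diff_Suc_1 le_add1 plus_1_eq_Suc)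
    have gh: "Ghat (Suc i) = (\<lambda>c. soft_thr (\<beta> (Suc i)) (mat_tvec (N * m i) (D (Suc i)) (Ghat i) c))"
      using Ghat_rec i by (metis diff_Suc_1 le_add1 plus_1_eq_Suc)
    have ei: "eps (Suc i) = sqrt (real (patch_l0 N (m (Suc i)) (n (Suc i)) (G (Suc i)))) *
                    (eps i + mutual_coh (N * m i) (N * m (Suc i)) (D (Suc i)) *
                       (real (stripe_l0 N (m (Suc i)) (n i) (G (Suc i))) - 1) * abs_max_nz (N * m (Suc i)) (G (Suc i))
                     + \<beta> (Suc i))"
      using eps_rec i by (metis diff_Suc_1 le_add1 plus_1_eq_Suc)
    define B where "B = eps i + mutual_coh (N * m i) (N * m (Suc i)) (D (Suc i)) *
                       (real (stripe_l0 N (m (Suc i)) (n i) (G (Suc i))) - 1) * abs_max_nz (N * m (Suc i)) (G (Suc i))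
                     + \<beta> (Suc i)"
    have L: "\<forall>c < N * m (Suc i). (Ghat (Suc i) c \<noteq> 0 \<longleftrightarrow> G (Suc i) c \<noteq> 0)
        \<and> \<bar>G (Suc i) c - Ghat (Suc i) c\<bar> \<le> B"
      unfolding gh B_def by (rule layer[OF N_pos mi(1) mi(2) ni(1) cd mo nzi er cbi])
    have B0: "B \<ge> 0" using L nzi by (meson abs_ge_zero order_trans)
    have pj: "sqrt (\<Sum>idx\<in>patch N (m (Suc i)) (n (Suc i)) j. (Ghat (Suc i) idx - G (Suc i) idx)\<^sup>2) \<le> eps (Suc i)"
      if j: "j < N" for j
    proof -
      have PL: "patch N (m (Suc i)) (n (Suc i)) j \<subseteq> {..<N * m (Suc i)}" by (auto simp: patch_def coords_def)
      have "sqrt (\<Sum>idx\<in>patch N (m (Suc i)) (n (Suc i)) j. (Ghat (Suc i) idx - G (Suc i) idx)\<^sup>2)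
          \<le> sqrt (real (card {c\<in>patch N (m (Suc i)) (n (Suc i)) j. G (Suc i) c \<noteq> 0})) * B"
        by (rule patch_bd) (use L B0 PL in auto)
      also have "\<dots> \<le> sqrt (real (patch_l0 N (m (Suc i)) (n (Suc i)) (G (Suc i)))) * B"
      proof (rule mult_right_mono[OF _ B0])
        have "card {c\<in>patch N (m (Suc i)) (n (Suc i)) j. G (Suc i) c \<noteq> 0} \<le> patch_l0 N (m (Suc i)) (n (Suc i)) (G (Suc i))"
          unfolding patch_l0_def using j by (intro Max_ge) auto
        thus "sqrt (real (card {c\<in>patch N (m (Suc i)) (n (Suc i)) j. G (Suc i) c \<noteq> 0}))
            \<le> sqrt (real (patch_l0 N (m (Suc i)) (n (Suc i)) (G (Suc i))))" by simp
      qed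
      finally show ?thesis using ei B_def by simp
    qed
    show ?thesis unfolding Q_def using pj L by auto
  qed
  have allQ: "i \<le> K \<Longrightarrow> Q i" for i
    by (induction i) (use base step in auto)
  show ?thesis
  proof (intro allI impI)
    fix i assume i: "1 \<le> i \<and> i \<le> K"
    hence Qi: "Q i" using allQ by simp
    hence sp: "\<forall>idx < N * m i. (Ghat i idx \<noteq> 0 \<longleftrightarrow> G i idx \<noteq> 0)" using i unfolding Q_def by simp
    have "sqrt (\<Sum>idx\<in>patch N (m i) (n i) j. (G i idx - Ghat i idx)\<^sup>2) \<le> eps i" if "j < N" for j
      using Qi that unfolding Q_def by (simp add: power2_commute)
    moreover have "N > 0" using N_pos by simp
    ultimately have "patch_l2 N (m i) (n i) (\<lambda>idx. G i idx - Ghat i idx) \<le> eps i"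
      unfolding patch_l2_def by (subst Max_le_iff) auto
    with sp show "(\<forall>idx < N * m i. (Ghat i idx \<noteq> 0 \<longleftrightarrow> G i idx \<noteq> 0))
           \<and> patch_l2 N (m i) (n i) (\<lambda>idx. G i idx - Ghat i idx) \<le> eps i" by blast
  qed
qed

end
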